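(* Let $h:(\mathbb{R}^n,0)\to(\mathbb{R}^n,0)$ be a bi-Lipschitz homeomorphism germ, let $A\subset\mathbb{R}^n$ be a set-germ at $0$ with $0\in\overline{A}$, and let $B\subset\mathbb{R}^n$ be a set-germ at $0$ with $0\in\overline{B}$. Assume that $A$ satisfies condition (SSP). Then $h(A)$ satisfies condition (SSP)-relative to $B$ if and only if $h(LD(A))$ satisfies condition (SSP)-relative to $B$.
   Context: For a set-germ $A\subset\mathbb{R}^n$ at $0$ with $0\in\overline A$, $D(A)=\{a\in S^{n-1}:\exists\, x_i\in A\setminus\{0\},\ x_i\to0,\ x_i/\|x_i\|\to a\}$ and $LD(A)=\{ta:a\in D(A),t\ge0\}$. For sequences, $\|u_m\|\ll\|v_m\|,\|w_m\|$ means $\|u_m\|/\|v_m\|\to0$ and $\|u_m\|/\|w_m\|\to0$. Given set-germs $A,B$ at $0$ with $0\in\overline A\cap\overline B$ and $D(A)\subseteq D(B)$, $A$ satisfies condition (SSP)-relative to $B$ if for every sequence $a_m\in B$ tending to $0$ with $\lim a_m/\|a_m\|\in D(A)$ there is a sequence $b_m\in A$ with $\|a_m-b_m\|\ll\|a_m\|,\|b_m\|$. Condition (SSP) (without reference) means (SSP)-relative to $\mathbb{R}^n$. A bi-Lipschitz homeomorphism germ is a homeomorphism germ $h$ with $h(0)=0$ and constants $0<K_1\le K_2$ with $K_1\|x-y\|\le\|h(x)-h(y)\|\le K_2\|x-y\|$ near $0$. *)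

theory Defs
  imports "HOL-Analysis.Analysis"
begin

text \<open>Set-germs at 0 in R^n are represented by subsets of real^'n.\<close>

definition Dir :: "(real^'n) set \<Rightarrow> (real^'n) set" where
  "Dir A = {a. \<exists>x::nat \<Rightarrow> real^'n. (\<forall>i. x i \<in> A - {0}) \<and> x \<longlonglongrightarrow> 0 \<and>
              (\<lambda>i. x i /\<^sub>R norm (x i)) \<longlonglongrightarrow> a}"

definition LD :: "(real^'n) set \<Rightarrow> (real^'n) set" where
  "LD A = {t *\<^sub>R a | t a. a \<in> Dir A \<and> t \<ge> 0}"

text \<open>Condition (SSP)-relative to B; the standing requirement D(A) \<subseteq> D(B)
  is included as part of the condition.\<close>
definition SSP_rel :: "(real^'n) set \<Rightarrow> (real^'n) set \<Rightarrow> bool" where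
  "SSP_rel A B \<longleftrightarrow> Dir A \<subseteq> Dir B \<and>
     (\<forall>a::nat \<Rightarrow> real^'n. (\<forall>m. a m \<in> B - {0}) \<and> a \<longlonglongrightarrow> 0 \<and>
        (\<exists>d\<in>Dir A. (\<lambda>m. a m /\<^sub>R norm (a m)) \<longlonglongrightarrow> d) \<longrightarrow>
        (\<exists>b::nat \<Rightarrow> real^'n. (\<forall>m. b m \<in> A) \<and>
           (\<lambda>m. norm (a m - b m) / norm (a m)) \<longlonglongrightarrow> 0 \<and>
           (\<lambda>m. norm (a m - b m) / norm (b m)) \<longlonglongrightarrow> 0))"

definition SSP :: "(real^'n) set \<Rightarrow> bool" where
  "SSP A \<longleftrightarrow> SSP_rel A UNIV"

end

theory Submission
  imports Defs "HOL-Library.Infinite_Set"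
begin

lemma infdist_lessE:
  fixes A :: "'a::metric_space set"
  assumes "A \<noteq> {}" "infdist x A < r"
  obtains y where "y \<in> A" "dist x y < r"
proof -
  have "bdd_below ((\<lambda>a. dist x a) ` A)" by (rule bdd_belowI[of _ 0]) auto
  then show ?thesis using assms that by (auto simp: infdist_notempty cINF_less_iff)
qed

definition rc :: "(nat \<Rightarrow> real^'n) \<Rightarrow> (nat \<Rightarrow> real^'n) \<Rightarrow> bool" where
  "rc a b \<longleftrightarrow> (\<forall>e>0. eventually (\<lambda>m. norm (a m - b m) \<le> e * norm (a m)) sequentially)"

lemma rcD: "rc a b \<Longrightarrow> e > 0 \<Longrightarrow> eventually (\<lambda>m. norm (a m - b m) \<le> e * norm (a m)) sequentially"
  unfolding rc_def by blast

lemma rc_tendsto: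
  assumes "rc a b" shows "(\<lambda>m. norm (a m - b m) / norm (a m)) \<longlonglongrightarrow> 0"
proof (rule tendstoI)
  fix e :: real assume e: "e > 0"
  have "eventually (\<lambda>m. norm (a m - b m) \<le> (e/2) * norm (a m)) sequentially"
    using rcD[OF assms, of "e/2"] e by simp
  then show "eventually (\<lambda>m. dist (norm (a m - b m) / norm (a m)) 0 < e) sequentially"
  proof (rule eventually_mono)
    fix m assume *: "norm (a m - b m) \<le> (e/2) * norm (a m)"
    show "dist (norm (a m - b m) / norm (a m)) 0 < e"
    proof (cases "a m = 0")
      case True then show ?thesis using e by simp
    next
      case False
      then have r: "norm (a m - b m) / norm (a m) \<le> e/2" using * by (simp add: divide_le_eq)
      have q: "0 \<le> norm (a m - b m) / norm (a m)" by simp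
      then have "dist (norm (a m - b m) / norm (a m)) 0 = norm (a m - b m) / norm (a m)"
        by (simp add: dist_real_def)
      then show ?thesis using r e by linarith
    qed
  qed
qed

lemma tendsto_rc:
  assumes "(\<lambda>m. norm (a m - b m) / norm (a m)) \<longlonglongrightarrow> 0" "eventually (\<lambda>m. a m \<noteq> 0) sequentially"
  shows "rc a b"
  unfolding rc_def
proof (intro allI impI)
  fix e :: real assume e: "e > 0"
  have "eventually (\<lambda>m. dist (norm (a m - b m) / norm (a m)) 0 < e) sequentially"
    using tendstoD[OF assms(1) e] .
  with assms(2) show "eventually (\<lambda>m. norm (a m - b m) \<le> e * norm (a m)) sequentially"
  proof (eventually_elim)
    case (elim m)
    then have "norm (a m - b m) / norm (a m) < e" by simp
    then show ?case using elim by (simp add: divide_less_eq)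
  qed
qed

lemma rc_sym:
  assumes "rc a b" shows "rc b a"
  unfolding rc_def
proof (intro allI impI)
  fix e :: real assume e: "e > 0"
  define e' where "e' = min (1/2) (e/2)"
  have e': "e' > 0" "e' \<le> 1/2" "2*e' \<le> e" using e by (auto simp: e'_def)
  have "eventually (\<lambda>m. norm (a m - b m) \<le> e' * norm (a m)) sequentially"
    using assms e' unfolding rc_def by auto
  then show "eventually (\<lambda>m. norm (b m - a m) \<le> e * norm (b m)) sequentially"
  proof (rule eventually_mono)
    fix m assume *: "norm (a m - b m) \<le> e' * norm (a m)"
    have "norm (a m) \<le> norm (b m) + norm (a m - b m)" by (metis norm_triangle_sub add.commute)
    then have "norm (a m - b m) \<le> e' * (norm (b m) + norm (a m - b m))"
      using * e' by (meson mult_left_mono order_trans less_imp_le)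
    then have "(1 - e') * norm (a m - b m) \<le> e' * norm (b m)" by (simp add: algebra_simps)
    moreover have "(1/2) * norm (a m - b m) \<le> (1 - e') * norm (a m - b m)"
      by (rule mult_right_mono) (use e' in auto)
    ultimately have "norm (a m - b m) \<le> (2 * e') * norm (b m)" by linarith
    also have "\<dots> \<le> e * norm (b m)" by (rule mult_right_mono) (use e' in auto)
    finally show "norm (b m - a m) \<le> e * norm (b m)" by (simp add: norm_minus_commute)
  qed
qed

lemma rc_trans:
  assumes "rc a b" "rc b c" shows "rc a c"
  unfolding rc_def
proof (intro allI impI)
  fix e :: real assume e: "e > 0"
  define e' where "e' = min 1 (e/4)"
  have e': "e' > 0" "e' \<le> 1" "4*e' \<le> e" using e by (auto simp: e'_def)
  have 1: "eventually (\<lambda>m. norm (a m - b m) \<le> e' * norm (a m)) sequentially"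
    using assms e' unfolding rc_def by auto
  have 2: "eventually (\<lambda>m. norm (b m - c m) \<le> e' * norm (b m)) sequentially"
    using assms e' unfolding rc_def by auto
  from 1 2 show "eventually (\<lambda>m. norm (a m - c m) \<le> e * norm (a m)) sequentially"
  proof eventually_elim
    case (elim m)
    have nb: "norm (b m) \<le> 2 * norm (a m)"
    proof -
      have "e' * norm (a m) \<le> 1 * norm (a m)" by (rule mult_right_mono) (use e' in auto)
      moreover have "norm (b m) \<le> norm (a m) + norm (b m - a m)" by (rule norm_triangle_sub)
      ultimately show ?thesis using elim(1) by (simp add: norm_minus_commute)
    qed
    have "norm (a m - c m) \<le> norm (a m - b m) + norm (b m - c m)" by (rule norm_diff_triangle_ineq[of _ _ "b m", simplified] | metis norm_triangle_ineq diff_add_cancel add_diff_eq)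
    also have "\<dots> \<le> e' * norm (a m) + e' * (2 * norm (a m))"
    proof -
      have "e' * norm (b m) \<le> e' * (2 * norm (a m))" by (rule mult_left_mono) (use nb e' in auto)
      then show ?thesis using elim by linarith
    qed
    also have "\<dots> = (3 * e') * norm (a m)" by (simp add: algebra_simps)
    also have "\<dots> \<le> e * norm (a m)" by (rule mult_right_mono) (use e' in auto)
    finally show ?case .
  qed
qed

lemma rc_cong:
  assumes "rc a b" "eventually (\<lambda>m. b m = c m) sequentially" shows "rc a c"
  using assms unfolding rc_def by (auto elim: eventually_elim2)

lemma rc_zero:
  assumes "rc a b" "a \<longlonglongrightarrow> 0" shows "b \<longlonglongrightarrow> 0"
proof -
  have "eventually (\<lambda>m. norm (a m - b m) \<le> 1 * norm (a m)) sequentially"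
    using rcD[OF assms(1), of 1] by simp
  then have "eventually (\<lambda>m. norm (b m) \<le> 2 * norm (a m)) sequentially"
  proof (rule eventually_mono)
    fix m assume "norm (a m - b m) \<le> 1 * norm (a m)"
    moreover have "norm (b m) \<le> norm (a m) + norm (b m - a m)" by (rule norm_triangle_sub)
    ultimately show "norm (b m) \<le> 2 * norm (a m)" by (simp add: norm_minus_commute)
  qed
  moreover have "(\<lambda>m. 2 * norm (a m)) \<longlonglongrightarrow> 0"
    using assms(2) tendsto_norm_zero tendsto_mult_right_zero by blast
  ultimately show ?thesis
    by (rule Lim_null_comparison)
qed

lemma rc_nonzero:
  assumes "rc a b" "eventually (\<lambda>m. a m \<noteq> 0) sequentially"
  shows "eventually (\<lambda>m. b m \<noteq> 0) sequentially"
proof -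
  have "eventually (\<lambda>m. norm (a m - b m) \<le> (1/2) * norm (a m)) sequentially"
    using rcD[OF assms(1), of "1/2"] by simp
  with assms(2) show ?thesis
    by eventually_elim auto
qed


lemma dir_ineq:
  fixes x y :: "real^'n"
  assumes "x \<noteq> 0"
  shows "norm (x /\<^sub>R norm x - y /\<^sub>R norm y) \<le> 2 * norm (x - y) / norm x"
proof (cases "y = 0")
  case True then show ?thesis using assms by simp
next
  case False
  have "x /\<^sub>R norm x - y /\<^sub>R norm y = (x - y) /\<^sub>R norm x + (y /\<^sub>R norm x - y /\<^sub>R norm y)"
    by (simp add: algebra_simps)
  then have "norm (x /\<^sub>R norm x - y /\<^sub>R norm y) \<le> norm ((x - y) /\<^sub>R norm x) + norm (y /\<^sub>R norm x - y /\<^sub>R norm y)"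
    by (metis norm_triangle_ineq)
  moreover have "norm ((x - y) /\<^sub>R norm x) = norm (x - y) / norm x" by (simp add: divide_inverse mult.commute)
  moreover have "y /\<^sub>R norm x - y /\<^sub>R norm y = (inverse (norm x) - inverse (norm y)) *\<^sub>R y"
    by (simp add: scaleR_diff_left)
  moreover have "norm ((inverse (norm x) - inverse (norm y)) *\<^sub>R y) = \<bar>norm y - norm x\<bar> / norm x"
    using assms False by (simp add: field_simps abs_mult)
  moreover have "\<bar>norm y - norm x\<bar> \<le> norm (x - y)"
    by (metis abs_minus_commute norm_triangle_ineq3)
  ultimately have e2: "norm (y /\<^sub>R norm x - y /\<^sub>R norm y) = \<bar>norm y - norm x\<bar> / norm x"
    and tri: "norm (x /\<^sub>R norm x - y /\<^sub>R norm y) \<le> norm (x - y) / norm x + norm (y /\<^sub>R norm x - y /\<^sub>R norm y)"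
    and ab: "\<bar>norm y - norm x\<bar> \<le> norm (x - y)"
    by simp_all
  have "\<bar>norm y - norm x\<bar> / norm x \<le> norm (x - y) / norm x"
    by (rule divide_right_mono) (use ab in auto)
  moreover have "2 * norm (x - y) / norm x = norm (x - y) / norm x + norm (x - y) / norm x"
    by (simp add: field_simps)
  ultimately show ?thesis using e2 tri by linarith
qed

lemma rc_dir:
  assumes "rc a b" "eventually (\<lambda>m. a m \<noteq> 0) sequentially"
    "(\<lambda>m. a m /\<^sub>R norm (a m)) \<longlonglongrightarrow> d"
  shows "(\<lambda>m. b m /\<^sub>R norm (b m)) \<longlonglongrightarrow> d"
proof -
  have t: "(\<lambda>m. 2 * (norm (a m - b m) / norm (a m))) \<longlonglongrightarrow> 0"
    using rc_tendsto[OF assms(1)] tendsto_mult_right_zero by blast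
  have "eventually (\<lambda>m. norm (b m /\<^sub>R norm (b m) - a m /\<^sub>R norm (a m)) \<le> 2 * (norm (a m - b m) / norm (a m))) sequentially"
    using assms(2) by (rule eventually_mono) (metis dir_ineq norm_minus_commute times_divide_eq_right)
  then have "(\<lambda>m. b m /\<^sub>R norm (b m) - a m /\<^sub>R norm (a m)) \<longlonglongrightarrow> 0"
    using t by (rule Lim_null_comparison)
  from tendsto_add[OF this assms(3)] show ?thesis by simp
qed

lemma Dir_norm: "d \<in> Dir A \<Longrightarrow> norm d = 1"
proof -
  assume "d \<in> Dir A"
  then obtain x where x: "\<forall>i. x i \<in> A - {0}" "(\<lambda>i. x i /\<^sub>R norm (x i)) \<longlonglongrightarrow> d"
    unfolding Dir_def by auto
  have "(\<lambda>i. norm (x i /\<^sub>R norm (x i))) \<longlonglongrightarrow> norm d" using tendsto_norm[OF x(2)] .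
  moreover have "(\<lambda>i. norm (x i /\<^sub>R norm (x i))) = (\<lambda>i. 1)" using x(1) by auto
  ultimately show ?thesis using LIMSEQ_unique tendsto_const by metis
qed

lemma LD_dir:
  assumes "y \<in> LD A" "y \<noteq> 0" shows "y /\<^sub>R norm y \<in> Dir A"
proof -
  obtain t a where ta: "y = t *\<^sub>R a" "a \<in> Dir A" "t \<ge> 0" using assms(1) unfolding LD_def by auto
  have na: "norm a = 1" using Dir_norm ta(2) .
  have "t > 0" using ta assms(2) by (cases "t = 0") auto
  then have "y /\<^sub>R norm y = a" using ta na by simp
  then show ?thesis using ta by simp
qed

lemma LD_mem: "a \<in> Dir A \<Longrightarrow> t \<ge> 0 \<Longrightarrow> t *\<^sub>R a \<in> LD A"
  unfolding LD_def by auto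

lemma subseq_null:
  fixes f :: "nat \<Rightarrow> real"
  assumes nn: "\<And>n. f n \<ge> 0"
    and sub: "\<And>r::nat\<Rightarrow>nat. strict_mono r \<Longrightarrow> \<exists>s::nat\<Rightarrow>nat. strict_mono s \<and> (\<lambda>k. f (r (s k))) \<longlonglongrightarrow> 0"
  shows "f \<longlonglongrightarrow> 0"
proof (rule ccontr)
  assume "\<not> f \<longlonglongrightarrow> 0"
  then obtain e where e: "e > 0" "\<not> eventually (\<lambda>n. dist (f n) 0 < e) sequentially"
    unfolding tendsto_iff by auto
  then have "frequently (\<lambda>n. \<not> f n < e) cofinite"
    using nn by (simp add: cofinite_eq_sequentially not_eventually)
  then have "infinite {n. \<not> f n < e}" by (simp add: frequently_cofinite)
  then obtain r :: "nat \<Rightarrow> nat" where r: "strict_mono r" "\<forall>n. r n \<in> {n. \<not> f n < e}"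
    using infinite_enumerate by blast
  obtain s :: "nat \<Rightarrow> nat" where s: "strict_mono s" "(\<lambda>k. f (r (s k))) \<longlonglongrightarrow> 0" using sub[OF r(1)] by blast
  have "eventually (\<lambda>k. dist (f (r (s k))) 0 < e) sequentially" using tendstoD[OF s(2) e(1)] .
  then obtain k where "dist (f (r (s k))) 0 < e" using eventually_sequentially by auto
  then show False using r(2) nn by auto
qed

lemma Dir_closed: "closed (Dir A)"
  unfolding closed_sequential_limits
proof (intro allI impI, elim conjE)
  fix a :: "nat \<Rightarrow> real^'a" and d
  assume a: "\<forall>n. a n \<in> Dir A" and ad: "a \<longlonglongrightarrow> d"
  have "\<exists>z. z \<in> A - {0} \<and> norm z < 1 / real (Suc k) \<and> norm (z /\<^sub>R norm z - a k) < 1 / real (Suc k)" for k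
  proof -
    obtain x where x: "\<forall>i. x i \<in> A - {0}" "x \<longlonglongrightarrow> 0" "(\<lambda>i. x i /\<^sub>R norm (x i)) \<longlonglongrightarrow> a k"
      using a unfolding Dir_def by auto
    have p: "1 / real (Suc k) > 0" by simp
    have "eventually (\<lambda>i. dist (x i) 0 < 1 / real (Suc k)) sequentially" using tendstoD[OF x(2) p] .
    moreover have "eventually (\<lambda>i. dist (x i /\<^sub>R norm (x i)) (a k) < 1 / real (Suc k)) sequentially"
      using tendstoD[OF x(3) p] .
    ultimately obtain i where "dist (x i) 0 < 1 / real (Suc k)" "dist (x i /\<^sub>R norm (x i)) (a k) < 1 / real (Suc k)"
      using eventually_sequentially by (metis (no_types, lifting) eventually_conj_iff order_refl)
    then show ?thesis using x(1) by (auto simp: dist_norm)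
  qed
  then obtain z where z: "\<And>k. z k \<in> A - {0}" "\<And>k. norm (z k) < 1 / real (Suc k)"
      "\<And>k. norm (z k /\<^sub>R norm (z k) - a k) < 1 / real (Suc k)"
    by metis
  have inv: "(\<lambda>k. 1 / real (Suc k)) \<longlonglongrightarrow> 0" by (rule LIMSEQ_Suc[OF lim_inverse_n'])
  have "z \<longlonglongrightarrow> 0"
    by (rule Lim_null_comparison[OF _ inv], rule always_eventually, rule allI, rule less_imp_le, rule z(2))
  moreover have "(\<lambda>k. z k /\<^sub>R norm (z k) - a k) \<longlonglongrightarrow> 0"
    by (rule Lim_null_comparison[OF _ inv], rule always_eventually, rule allI, rule less_imp_le, rule z(3))
  then have "(\<lambda>k. z k /\<^sub>R norm (z k)) \<longlonglongrightarrow> d" using tendsto_add[OF _ ad] by fastforce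
  ultimately show "d \<in> Dir A" unfolding Dir_def using z(1) by blast
qed


lemma dir_subseq:
  fixes x :: "nat \<Rightarrow> real^'n"
  assumes "\<forall>m. x m \<noteq> 0"
  shows "\<exists>(s::nat\<Rightarrow>nat) d. strict_mono s \<and> (\<lambda>k. x (s k) /\<^sub>R norm (x (s k))) \<longlonglongrightarrow> d"
proof -
  have mem: "\<forall>m. x m /\<^sub>R norm (x m) \<in> sphere 0 1" using assms by auto
  have H: "\<forall>f. (\<forall>n. f n \<in> sphere (0::real^'n) 1) \<longrightarrow> (\<exists>l\<in>sphere 0 1. \<exists>r::nat\<Rightarrow>nat. strict_mono r \<and> (f \<circ> r) \<longlonglongrightarrow> l)"
    using compact_sphere[of "0::real^'n" 1] unfolding compact_def .
  obtain d and s :: "nat \<Rightarrow> nat" where "strict_mono s" "((\<lambda>m. x m /\<^sub>R norm (x m)) \<circ> s) \<longlonglongrightarrow> d"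
    using mp[OF spec[OF H, of "\<lambda>m. x m /\<^sub>R norm (x m)"] mem] by auto
  then show ?thesis by (auto simp: o_def)
qed

lemma subseq_Dir:
  fixes x :: "nat \<Rightarrow> real^'n"
  assumes "\<forall>m. x m \<in> A - {0}" "x \<longlonglongrightarrow> 0" "strict_mono (r::nat\<Rightarrow>nat)" "strict_mono (s::nat\<Rightarrow>nat)"
    "(\<lambda>k. x (r (s k)) /\<^sub>R norm (x (r (s k)))) \<longlonglongrightarrow> d"
  shows "d \<in> Dir A"
proof -
  have "strict_mono (r \<circ> s)" using assms by (simp add: strict_mono_o)
  then have "(x \<circ> (r \<circ> s)) \<longlonglongrightarrow> 0" using LIMSEQ_subseq_LIMSEQ assms(2) by blast
  then show ?thesis unfolding Dir_def using assms(1,5) by (auto simp: o_def)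
qed

lemma M1:
  fixes x :: "nat \<Rightarrow> real^'n"
  assumes x: "\<forall>m. x m \<in> A - {0}" "x \<longlonglongrightarrow> 0"
  shows "\<exists>y. (\<forall>m. y m \<in> LD A) \<and> rc x y"
proof -
  define u where "u m = x m /\<^sub>R norm (x m)" for m
  have nz: "\<forall>m. x m \<noteq> 0" using x by auto
  have key: "\<exists>(s::nat\<Rightarrow>nat) d. strict_mono s \<and> d \<in> Dir A \<and> (\<lambda>k. u (r (s k))) \<longlonglongrightarrow> d" if r: "strict_mono r" for r :: "nat \<Rightarrow> nat"
  proof -
    obtain s :: "nat \<Rightarrow> nat" and d where s: "strict_mono s" "(\<lambda>k. x (r (s k)) /\<^sub>R norm (x (r (s k)))) \<longlonglongrightarrow> d"
      using dir_subseq[of "\<lambda>k. x (r k)"] nz by blast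
    have "d \<in> Dir A" using subseq_Dir[OF x r s(1) s(2)] .
    then show ?thesis using s unfolding u_def by blast
  qed
  have ne: "Dir A \<noteq> {}" using key[of id] by (auto simp: strict_mono_def)
  define f where "f m = infdist (u m) (Dir A)" for m
  have f0: "f \<longlonglongrightarrow> 0"
  proof (rule subseq_null)
    show "\<And>n. 0 \<le> f n" unfolding f_def by (rule infdist_nonneg)
    fix r :: "nat \<Rightarrow> nat" assume "strict_mono r"
    then obtain s :: "nat \<Rightarrow> nat" and d where s: "strict_mono s" "d \<in> Dir A" "(\<lambda>k. u (r (s k))) \<longlonglongrightarrow> d"
      using key by blast
    have "(\<lambda>k. u (r (s k)) - d) \<longlonglongrightarrow> d - d" using tendsto_diff[OF s(3) tendsto_const[of d]] .
    then have "(\<lambda>k. u (r (s k)) - d) \<longlonglongrightarrow> 0" by simp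
    moreover have "norm (f (r (s k))) \<le> norm (u (r (s k)) - d)" for k
    proof -
      have "f (r (s k)) \<le> dist (u (r (s k))) d" unfolding f_def by (rule infdist_le[OF s(2)])
      moreover have "0 \<le> f (r (s k))" unfolding f_def by (rule infdist_nonneg)
      ultimately show ?thesis by (simp add: dist_norm)
    qed
    ultimately have "(\<lambda>k. f (r (s k))) \<longlonglongrightarrow> 0"
      by (intro Lim_null_comparison[of "\<lambda>k. f (r (s k))" "\<lambda>k. norm (u (r (s k)) - d)"] always_eventually allI)
         (auto intro: tendsto_norm_zero)
    then show "\<exists>s. strict_mono s \<and> (\<lambda>k. f (r (s k))) \<longlonglongrightarrow> 0" using s(1) by blast
  qed
  have "\<forall>m. \<exists>z. z \<in> Dir A \<and> f m = dist (u m) z"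
  proof
    fix m
    obtain z where "z \<in> Dir A" "infdist (u m) (Dir A) = dist (u m) z"
      using infdist_attains_inf[OF Dir_closed ne] by blast
    then show "\<exists>z. z \<in> Dir A \<and> f m = dist (u m) z" unfolding f_def by blast
  qed
  from choice[OF this] obtain d where d': "\<forall>m. d m \<in> Dir A \<and> f m = dist (u m) (d m)" by blast
  then have d: "\<And>m. d m \<in> Dir A" "\<And>m. f m = dist (u m) (d m)" by auto
  define y where "y m = norm (x m) *\<^sub>R d m" for m
  have "y m \<in> LD A" for m unfolding y_def by (rule LD_mem[OF d(1)]) simp
  moreover have "rc x y" unfolding rc_def
  proof (intro allI impI)
    fix e :: real assume e: "e > 0"
    have "eventually (\<lambda>m. dist (f m) 0 < e) sequentially" using tendstoD[OF f0 e] .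
    then show "eventually (\<lambda>m. norm (x m - y m) \<le> e * norm (x m)) sequentially"
    proof (rule eventually_mono)
      fix m assume "dist (f m) 0 < e"
      then have fe: "f m \<le> e" by simp
      have "x m - y m = norm (x m) *\<^sub>R (u m - d m)"
        using nz unfolding u_def y_def by (simp add: algebra_simps)
      then have eq: "norm (x m - y m) = norm (x m) * f m" using d(2) by (simp add: dist_norm)
      have "f m * norm (x m) \<le> e * norm (x m)" by (rule mult_right_mono[OF fe]) simp
      moreover have "norm (x m) * f m = f m * norm (x m)" by (rule mult.commute)
      ultimately show "norm (x m - y m) \<le> e * norm (x m)" using eq by linarith
    qed
  qed
  ultimately show ?thesis by blast
qed

lemma M2:
  fixes y :: "nat \<Rightarrow> real^'n"
  assumes ssp: "SSP A" and y: "\<forall>m. y m \<in> LD A - {0}" "y \<longlonglongrightarrow> 0"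
  shows "\<exists>x. (\<forall>m. x m \<in> A) \<and> rc y x"
proof -
  have nz: "\<forall>m. y m \<noteq> 0" using y by auto
  have dA: "y m /\<^sub>R norm (y m) \<in> Dir A" for m using LD_dir y(1) by blast
  have key: "\<exists>(s::nat\<Rightarrow>nat) b. strict_mono s \<and> (\<forall>k. b k \<in> A) \<and>
      (\<lambda>k. norm (y (r (s k)) - b k) / norm (y (r (s k)))) \<longlonglongrightarrow> 0" if r: "strict_mono r" for r :: "nat \<Rightarrow> nat"
  proof -
    obtain s :: "nat \<Rightarrow> nat" and d where s: "strict_mono s" "(\<lambda>k. y (r (s k)) /\<^sub>R norm (y (r (s k)))) \<longlonglongrightarrow> d"
      using dir_subseq[of "\<lambda>k. y (r k)"] nz by blast
    have CL: "\<forall>x l. (\<forall>n. x n \<in> Dir A) \<and> x \<longlonglongrightarrow> l \<longrightarrow> l \<in> Dir A"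
      using Dir_closed[of A] unfolding closed_sequential_limits .
    have "d \<in> Dir A"
      using CL[rule_format, of "\<lambda>k. y (r (s k)) /\<^sub>R norm (y (r (s k)))" d] s(2) dA by blast
    moreover have "strict_mono (r \<circ> s)" using r s by (simp add: strict_mono_o)
    then have "(y \<circ> (r \<circ> s)) \<longlonglongrightarrow> 0" using LIMSEQ_subseq_LIMSEQ y(2) by blast
    ultimately obtain b where "\<forall>m. b m \<in> A"
      "(\<lambda>m. norm (y (r (s m)) - b m) / norm (y (r (s m)))) \<longlonglongrightarrow> 0"
      using ssp nz s(2) unfolding SSP_def SSP_rel_def by (auto simp: o_def)
    then show ?thesis using s(1) by blast
  qed
  have ne: "A \<noteq> {}" using key[of id] by (auto simp: strict_mono_def)
  define g where "g m = infdist (y m) A / norm (y m)" for m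
  have g0: "g \<longlonglongrightarrow> 0"
  proof (rule subseq_null)
    show "\<And>n. 0 \<le> g n" unfolding g_def by (simp add: infdist_nonneg)
    fix r :: "nat \<Rightarrow> nat" assume "strict_mono r"
    then obtain s :: "nat \<Rightarrow> nat" and b where s: "strict_mono s" "\<forall>k. b k \<in> A"
      "(\<lambda>k. norm (y (r (s k)) - b k) / norm (y (r (s k)))) \<longlonglongrightarrow> 0"
      using key by blast
    have "(\<lambda>k. g (r (s k))) \<longlonglongrightarrow> 0"
      using s(3)
    proof (rule Lim_null_comparison[rotated], intro always_eventually allI)
      fix k
      have "infdist (y (r (s k))) A \<le> norm (y (r (s k)) - b k)"
        using infdist_le[OF s(2)[rule_format, of k]] by (simp add: dist_norm)
      then show "norm (g (r (s k))) \<le> norm (y (r (s k)) - b k) / norm (y (r (s k)))"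
        unfolding g_def by (simp add: divide_right_mono infdist_nonneg)
    qed
    then show "\<exists>s. strict_mono s \<and> (\<lambda>k. g (r (s k))) \<longlonglongrightarrow> 0" using s(1) by blast
  qed
  have "\<forall>m. \<exists>z. z \<in> A \<and> dist (y m) z < infdist (y m) A + norm (y m) / real (Suc m)"
  proof
    fix m
    have "infdist (y m) A < infdist (y m) A + norm (y m) / real (Suc m)" using nz by simp
    then obtain z where "z \<in> A" "dist (y m) z < infdist (y m) A + norm (y m) / real (Suc m)"
      using infdist_lessE[OF ne] by blast
    then show "\<exists>z. z \<in> A \<and> dist (y m) z < infdist (y m) A + norm (y m) / real (Suc m)" by blast
  qed
  from choice[OF this] obtain x where x': "\<forall>m. x m \<in> A \<and> dist (y m) (x m) < infdist (y m) A + norm (y m) / real (Suc m)"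
    by blast
  then have x: "\<And>m. x m \<in> A" "\<And>m. dist (y m) (x m) < infdist (y m) A + norm (y m) / real (Suc m)"
    by auto
  have inv: "(\<lambda>k. 1 / real (Suc k)) \<longlonglongrightarrow> 0" by (rule LIMSEQ_Suc[OF lim_inverse_n'])
  have gi: "(\<lambda>m. g m + 1 / real (Suc m)) \<longlonglongrightarrow> 0" using tendsto_add[OF g0 inv] by simp
  have "rc y x" unfolding rc_def
  proof (intro allI impI)
    fix e :: real assume e: "e > 0"
    have "eventually (\<lambda>m. dist (g m + 1 / real (Suc m)) 0 < e) sequentially" using tendstoD[OF gi e] .
    then show "eventually (\<lambda>m. norm (y m - x m) \<le> e * norm (y m)) sequentially"
    proof (rule eventually_mono)
      fix m assume "dist (g m + 1 / real (Suc m)) 0 < e"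
      then have ge: "g m + 1 / real (Suc m) \<le> e" by simp
      have gy: "g m * norm (y m) = infdist (y m) A" using nz unfolding g_def by simp
      have "(g m + 1 / real (Suc m)) * norm (y m) = g m * norm (y m) + norm (y m) / real (Suc m)"
        by (simp add: algebra_simps)
      then have "infdist (y m) A + norm (y m) / real (Suc m) = (g m + 1 / real (Suc m)) * norm (y m)"
        using gy by simp
      also have "\<dots> \<le> e * norm (y m)" using ge by (simp add: mult_right_mono)
      finally show "norm (y m - x m) \<le> e * norm (y m)" using x(2)[of m] by (simp add: dist_norm)
    qed
  qed
  then show ?thesis using x(1) by blast
qed


definition approx :: "(real^'n) set \<Rightarrow> (real^'n) set \<Rightarrow> bool" where
  "approx X Y \<longleftrightarrow> (\<forall>a. (\<forall>m. a m \<in> X - {0}) \<and> a \<longlonglongrightarrow> 0 \<longrightarrow> (\<exists>b. (\<forall>m. b m \<in> Y) \<and> rc a b))"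

lemma rc_cong_left:
  assumes "rc a b" "eventually (\<lambda>m. a m = c m) sequentially" shows "rc c b"
  using assms unfolding rc_def by (auto elim: eventually_elim2)

lemma approx_ev:
  assumes ap: "approx X Y" and a: "\<forall>m. a m \<in> X" "a \<longlonglongrightarrow> 0" "eventually (\<lambda>m. a m \<noteq> 0) sequentially"
  shows "\<exists>b. (\<forall>m. b m \<in> Y) \<and> rc a b"
proof -
  obtain N where N: "\<And>m. m \<ge> N \<Longrightarrow> a m \<noteq> 0" using a(3) unfolding eventually_sequentially by blast
  define a' where "a' m = a (max m N)" for m
  have ev: "eventually (\<lambda>m. a' m = a m) sequentially"
    unfolding a'_def eventually_sequentially by (auto intro!: exI[of _ N] simp: max_def)
  have ev': "eventually (\<lambda>m. a m = a' m) sequentially" using ev by (simp add: eq_commute)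
  have "a' \<longlonglongrightarrow> 0" using Lim_transform_eventually[OF a(2) ev'] .
  moreover have "\<forall>m. a' m \<in> X - {0}" using a(1) N unfolding a'_def by auto
  ultimately obtain b where "\<forall>m. b m \<in> Y" "rc a' b" using ap unfolding approx_def by blast
  then show ?thesis using rc_cong_left[OF _ ev] by blast
qed

lemma approx_Dir:
  assumes ap: "approx X Y" shows "Dir X \<subseteq> Dir Y"
proof
  fix d assume "d \<in> Dir X"
  then obtain x where x: "\<forall>i. x i \<in> X - {0}" "x \<longlonglongrightarrow> 0" "(\<lambda>i. x i /\<^sub>R norm (x i)) \<longlonglongrightarrow> d"
    unfolding Dir_def by auto
  obtain b where b: "\<forall>m. b m \<in> Y" "rc x b" using ap x unfolding approx_def by blast
  have evx: "eventually (\<lambda>m. x m \<noteq> 0) sequentially" using x(1) by auto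
  have b0: "b \<longlonglongrightarrow> 0" using rc_zero[OF b(2) x(2)] .
  have bd: "(\<lambda>m. b m /\<^sub>R norm (b m)) \<longlonglongrightarrow> d" using rc_dir[OF b(2) evx x(3)] .
  obtain N where N: "\<And>m. m \<ge> N \<Longrightarrow> b m \<noteq> 0"
    using rc_nonzero[OF b(2) evx] unfolding eventually_sequentially by blast
  have h1: "\<forall>i. b (i + N) \<in> Y - {0}" using b(1) N by auto
  have h2: "(\<lambda>i. b (i + N)) \<longlonglongrightarrow> 0" using LIMSEQ_ignore_initial_segment[OF b0] .
  have h3: "(\<lambda>i. b (i + N) /\<^sub>R norm (b (i + N))) \<longlonglongrightarrow> d"
    using LIMSEQ_ignore_initial_segment[OF bd] .
  have "\<exists>x. (\<forall>i. x i \<in> Y - {0}) \<and> x \<longlonglongrightarrow> 0 \<and> (\<lambda>i. x i /\<^sub>R norm (x i)) \<longlonglongrightarrow> d"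
    using h1 h2 h3 by (intro exI[of _ "\<lambda>i. b (i + N)"]) simp
  then show "d \<in> Dir Y" unfolding Dir_def by simp
qed

lemma transfer:
  assumes S: "SSP_rel Y B" and ap: "approx Y X" and D: "Dir X = Dir Y"
  shows "SSP_rel X B"
  unfolding SSP_rel_def
proof (intro conjI allI impI)
  show "Dir X \<subseteq> Dir B" using S D unfolding SSP_rel_def by simp
  fix a :: "nat \<Rightarrow> real^'a"
  assume "(\<forall>m. a m \<in> B - {0}) \<and> a \<longlonglongrightarrow> 0 \<and> (\<exists>d\<in>Dir X. (\<lambda>m. a m /\<^sub>R norm (a m)) \<longlonglongrightarrow> d)"
  then have a: "\<forall>m. a m \<in> B - {0}" "a \<longlonglongrightarrow> 0" "\<exists>d\<in>Dir Y. (\<lambda>m. a m /\<^sub>R norm (a m)) \<longlonglongrightarrow> d"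
    using D by auto
  obtain c where c: "\<forall>m. c m \<in> Y" "(\<lambda>m. norm (a m - c m) / norm (a m)) \<longlonglongrightarrow> 0"
    using S a unfolding SSP_rel_def by blast
  have eva: "eventually (\<lambda>m. a m \<noteq> 0) sequentially" using a(1) by auto
  have rac: "rc a c" using tendsto_rc[OF c(2) eva] .
  obtain b where b: "\<forall>m. b m \<in> X" "rc c b"
    using approx_ev[OF ap c(1) rc_zero[OF rac a(2)] rc_nonzero[OF rac eva]] by blast
  have rab: "rc a b" using rc_trans[OF rac b(2)] .
  have "(\<lambda>m. norm (b m - a m) / norm (b m)) \<longlonglongrightarrow> 0" using rc_tendsto[OF rc_sym[OF rab]] .
  then have "(\<lambda>m. norm (a m - b m) / norm (b m)) \<longlonglongrightarrow> 0" by (simp add: norm_minus_commute)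
  then show "\<exists>b. (\<forall>m. b m \<in> X) \<and> (\<lambda>m. norm (a m - b m) / norm (a m)) \<longlonglongrightarrow> 0 \<and>
           (\<lambda>m. norm (a m - b m) / norm (b m)) \<longlonglongrightarrow> 0"
    using b(1) rc_tendsto[OF rab] by blast
qed

lemma h_approx:
  fixes h :: "real^'n \<Rightarrow> real^'n"
  assumes U: "open U" "0 \<in> U" and h0: "h 0 = 0" and K: "0 < K1" "K1 \<le> K2"
    and L: "\<forall>x\<in>U. \<forall>y\<in>U. K1 * norm (x - y) \<le> norm (h x - h y) \<and> norm (h x - h y) \<le> K2 * norm (x - y)"
    and PQ: "\<And>x. \<forall>m. x m \<in> P - {0} \<Longrightarrow> x \<longlonglongrightarrow> 0 \<Longrightarrow> \<exists>y. (\<forall>m. y m \<in> Q) \<and> rc x y"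
  shows "approx (h ` (P \<inter> U)) (h ` (Q \<inter> U))"
  unfolding approx_def
proof (intro allI impI, elim conjE)
  fix a :: "nat \<Rightarrow> real^'n"
  assume a: "\<forall>m. a m \<in> h ` (P \<inter> U) - {0}" "a \<longlonglongrightarrow> 0"
  have "\<forall>m. \<exists>z. z \<in> P \<inter> U \<and> a m = h z" using a(1) by blast
  from choice[OF this] obtain x where x': "\<forall>m. x m \<in> P \<inter> U \<and> a m = h (x m)" by blast
  then have x: "\<And>m. x m \<in> P \<inter> U" "\<And>m. a m = h (x m)" by auto
  have xnz: "x m \<noteq> 0" for m
  proof
    assume "x m = 0"
    then have "a m = 0" using x(2)[of m] h0 by simp
    then show False using a(1) by blast
  qed
  have xle: "K1 * norm (x m) \<le> norm (a m)" for m
  proof -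
    have "x m \<in> U" using x(1)[of m] by blast
    then have "K1 * norm (x m - 0) \<le> norm (h (x m) - h 0)" using L U(2) by blast
    then show ?thesis using x(2)[of m] h0 by simp
  qed
  have x0: "x \<longlonglongrightarrow> 0"
  proof (rule Lim_null_comparison)
    show "(\<lambda>m. norm (a m) / K1) \<longlonglongrightarrow> 0"
      using tendsto_divide_zero[OF tendsto_norm_zero[OF a(2)]] by simp
    show "\<forall>\<^sub>F m in sequentially. norm (x m) \<le> norm (a m) / K1"
    proof (rule always_eventually, rule allI)
      fix m
      have "K1 * norm (x m) / K1 \<le> norm (a m) / K1" by (rule divide_right_mono[OF xle]) (use K in simp)
      then show "norm (x m) \<le> norm (a m) / K1" using K by simp
    qed
  qed
  obtain y where y: "\<forall>m. y m \<in> Q" "rc x y" using PQ[of x] x(1) xnz x0 by blast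
  have y0: "y \<longlonglongrightarrow> 0" using rc_zero[OF y(2) x0] .
  obtain r where r: "r > 0" "ball 0 r \<subseteq> U" using U open_contains_ball by blast
  have "eventually (\<lambda>m. dist (y m) 0 < r) sequentially" using tendstoD[OF y0 r(1)] .
  then obtain N where N0: "\<And>m. m \<ge> N \<Longrightarrow> dist (y m) 0 < r"
    unfolding eventually_sequentially by blast
  have N: "y m \<in> U" if "m \<ge> N" for m
  proof -
    have "y m \<in> ball 0 r" using N0[OF that] by (simp add: dist_commute)
    then show ?thesis using r(2) by blast
  qed
  define z where "z m = y (max m N)" for m
  have zQU: "z m \<in> Q \<inter> U" for m using y(1) N unfolding z_def by auto
  have "eventually (\<lambda>m. y m = z m) sequentially"
    unfolding z_def eventually_sequentially by (auto intro!: exI[of _ N] simp: max_def)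
  then have rz: "rc x z" using rc_cong[OF y(2)] by blast
  define b where "b m = h (z m)" for m
  have "b m \<in> h ` (Q \<inter> U)" for m unfolding b_def using zQU by blast
  moreover have "rc a b" unfolding rc_def
  proof (intro allI impI)
    fix e :: real assume e: "e > 0"
    have K2: "K2 > 0" using K by simp
    have pos: "e * K1 / K2 > 0" using e K K2 by simp
    have "eventually (\<lambda>m. norm (x m - z m) \<le> (e * K1 / K2) * norm (x m)) sequentially"
      using rcD[OF rz pos] .
    then show "eventually (\<lambda>m. norm (a m - b m) \<le> e * norm (a m)) sequentially"
    proof (rule eventually_mono)
      fix m assume *: "norm (x m - z m) \<le> (e * K1 / K2) * norm (x m)"
      have "norm (a m - b m) \<le> K2 * norm (x m - z m)"
        using L x(1)[of m] zQU[of m] unfolding b_def x(2) by blast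
      also have "\<dots> \<le> K2 * ((e * K1 / K2) * norm (x m))" by (rule mult_left_mono[OF *]) (use K2 in simp)
      also have "\<dots> = e * (K1 * norm (x m))" using K2 by simp
      also have "\<dots> \<le> e * norm (a m)" by (rule mult_left_mono[OF xle]) (use e in simp)
      finally show "norm (a m - b m) \<le> e * norm (a m)" .
    qed
  qed
  ultimately show "\<exists>b. (\<forall>m. b m \<in> h ` (Q \<inter> U)) \<and> rc a b" by blast
qed

theorem theorem2p13:
  fixes h :: "real^'n \<Rightarrow> real^'n" and U A B :: "(real^'n) set"
    and K1 K2 :: real
  assumes "open U" and "0 \<in> U" and "h 0 = 0" and "open (h ` U)"
    and "0 < K1" and "K1 \<le> K2"
    and "\<forall>x\<in>U. \<forall>y\<in>U. K1 * norm (x - y) \<le> norm (h x - h y) \<and> norm (h x - h y) \<le> K2 * norm (x - y)"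
    and "0 \<in> closure A" and "0 \<in> closure B"
    and "SSP A"
  shows "SSP_rel (h ` (A \<inter> U)) B \<longleftrightarrow> SSP_rel (h ` (LD A \<inter> U)) B"
proof -
  have ap1: "approx (h ` (A \<inter> U)) (h ` (LD A \<inter> U))"
    by (rule h_approx[OF assms(1,2,3,5,6,7)]) (rule M1, auto)
  have ap2: "approx (h ` (LD A \<inter> U)) (h ` (A \<inter> U))"
    by (rule h_approx[OF assms(1,2,3,5,6,7)]) (rule M2[OF assms(10)], auto)
  have D: "Dir (h ` (A \<inter> U)) = Dir (h ` (LD A \<inter> U))"
    using approx_Dir[OF ap1] approx_Dir[OF ap2] by blast
  show ?thesis using transfer[OF _ ap1 D[symmetric]] transfer[OF _ ap2 D] by blast
qed

end
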